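(* Let $\alpha>0$ and let $u:[0,1]\to\mathbb R$ be any function with $u(0)=u(1)=0$ satisfying $u(1-x)+(1-x)^\alpha u\!\left(\tfrac{y}{1-x}\right)=u(y)+(1-y)^\alpha u\!\left(\tfrac{1-x-y}{1-y}\right)$ for all $x,y\in[0,1)$ with $x+y\in[0,1]$. Then $u(x)=u(1-x)$ for all $x\in\mathbb Q\cap[0,1]$. *)

theory Defs
  imports Complex_Main
begin

end

theory Submission
  imports Defs
begin

theorem propositionC2:
  fixes \<alpha> :: real and u :: "real \<Rightarrow> real"
  assumes "\<alpha> > 0"
    and "u 0 = 0" and "u 1 = 0"
    and "\<And>x y. 0 \<le> x \<Longrightarrow> x < 1 \<Longrightarrow> 0 \<le> y \<Longrightarrow> y < 1 \<Longrightarrow> x + y \<le> 1 \<Longrightarrow>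
           u (1 - x) + (1 - x) powr \<alpha> * u (y / (1 - x))
             = u y + (1 - y) powr \<alpha> * u ((1 - x - y) / (1 - y))"
  shows "\<forall>x \<in> \<rat>. 0 \<le> x \<and> x \<le> 1 \<longrightarrow> u x = u (1 - x)"
proof -
  have key: "u a - u (1 - a) = - (a powr \<alpha>) * (u ((1 - a) / a) - u (1 - (1 - a) / a))"
    if "1/2 \<le> a" "a \<le> 1" for a :: real
  proof -
    have E: "u (1 - (1-a)) + (1 - (1-a)) powr \<alpha> * u ((1-a) / (1 - (1-a)))
             = u (1-a) + (1 - (1-a)) powr \<alpha> * u ((1 - (1-a) - (1-a)) / (1 - (1-a)))"
      using assms(4)[of "1-a" "1-a"] that by simp
    have "(1 - (1-a) - (1-a)) / (1 - (1-a)) = 1 - (1-a)/a"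
      using that by (simp add: field_simps)
    with E have "u a + a powr \<alpha> * u ((1-a)/a) = u (1-a) + a powr \<alpha> * u (1 - (1-a)/a)"
      by simp
    then show ?thesis by (simp add: algebra_simps)
  qed
  have main: "\<forall>p. p \<le> q \<longrightarrow> 0 < q \<longrightarrow> u (real p / real q) = u (1 - real p / real q)" for q :: nat
  proof (induction q rule: less_induct)
    case (less q)
    have big: "u (real p / real q) = u (1 - real p / real q)" if "p \<le> q" "0 < q" "q \<le> 2*p" for p
    proof (cases "p = q")
      case True
      then show ?thesis using assms(2,3) that by simp
    next
      case False
      then have pq: "p < q" using that by simp
      have pos: "0 < p" using that pq by linarith
      have "u (real (q-p) / real p) = u (1 - real (q-p) / real p)"
      proof -
        have "\<forall>pa. pa \<le> p \<longrightarrow> 0 < p \<longrightarrow> u (real pa / real p) = u (1 - real pa / real p)"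
          using less.IH[of p] pq by blast
        moreover have "q - p \<le> p" using that by linarith
        ultimately show ?thesis using pos by blast
      qed
      moreover have "(1 - real p / real q) / (real p / real q) = real (q-p) / real p"
        using pq pos that by (simp add: field_simps of_nat_diff)
      moreover have "1/2 \<le> real p / real q" using that by (simp add: field_simps)
      moreover have "real p / real q \<le> 1" using that by (simp add: field_simps)
      ultimately show ?thesis using key[of "real p / real q"] by (simp only:) simp
    qed
    show ?case
    proof (intro allI impI)
      fix p assume h: "p \<le> q" "0 < q"
      show "u (real p / real q) = u (1 - real p / real q)"
      proof (cases "q \<le> 2*p")
        case True then show ?thesis using big h by blast
      next
        case False
        have "u (real (q-p) / real q) = u (1 - real (q-p) / real q)"
          using big[of "q-p"] h False by auto
        moreover have "real (q-p) / real q = 1 - real p / real q"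
          using h by (simp add: field_simps of_nat_diff)
        ultimately show ?thesis by simp
      qed
    qed
  qed
  show ?thesis
  proof (intro ballI impI)
    fix x :: real assume x: "x \<in> \<rat>" "0 \<le> x \<and> x \<le> 1"
    from x(1) obtain a b where ab: "b > 0" "x = of_int a / of_int b"
      by (metis Rats_cases')
    have a0: "a \<ge> 0" using x(2) ab
      by (metis divide_less_0_iff not_le of_int_0_less_iff of_int_less_0_iff)
    have ab2: "a \<le> b" using x(2) ab by (simp add: divide_le_eq_1)
    have "x = real (nat a) / real (nat b)" using ab a0 by simp
    moreover have "nat a \<le> nat b" "0 < nat b" using ab ab2 by auto
    ultimately show "u x = u (1 - x)" using main[of "nat b"] by simp
  qed
qed

end
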